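(* For each $n\ge1$ let $\mathrm T_n=(T_n,\mathrm D_n)$ be a random labeled multitype plane tree with valid law $\nu_n$, and let $\mathrm T_n^{\mathrm{sym}}$ have law $\nu_n^{\mathrm{sym}}$. Suppose there exist positive sequences $a_n\to0$, $b_n\to0$ and a $C([0,1],\mathbb R^2)$-valued random process $(C,Z)$ with $(a_nC_{\mathrm T_n^{\mathrm{sym}}},b_nZ_{\mathrm T_n^{\mathrm{sym}}})\to(C,Z)$ in distribution for the uniform topology. Write $\theta_n=\theta_{T_n}$. Then for all $\beta>0$ there exists $\alpha=\alpha(\beta)>0$ such that \[ \limsup_n\mathbb P\Big(\sup_{|i-j|\le\lfloor\alpha|T_n|\rfloor}a_n\,\mathrm{dist}\big(\theta_n(i),\theta_n(j)\big)>\beta\Big)<\beta. \]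
   Context: Plane trees are rooted, encoded by Ulam–Harris words, with vertex types in a countable set $S$; $\mathrm{dist}$ is graph distance; a labeled tree $(t,\mathrm d)$ has real displacements on edges and $\ell(v)$ is the sum of displacements from the root to $v$. $P_t$ is the set of vectors of permutations of the children of each vertex; $\sigma(t,\mathrm d)$ reorders children accordingly with displacements following edges; the symmetrization of a random labeled tree is $\sigma(T,\mathrm D)$ with $\sigma$ uniform on $P_T$ given the tree, and $\nu^{\mathrm{sym}}$ is its law. A law $\nu$ is valid if (i) the law of the unlabeled tree is invariant under all $\sigma\in P_t$, (ii) the child-displacement vectors $D_v=(D_{v,v1},\dots,D_{v,vk(v)})$ are conditionally independent given $T$, (iii) the conditional law of $D_v$ depends only on the type of $v$ and the types of its children. The contour exploration $\theta_t:\{0,\dots,2|t|-2\}\to V(t)$ is the depth-first walk ($\theta_t(0)=\emptyset$; $\theta_t(i)$ is the lexicographically first unvisited child of $\theta_t(i-1)$, else its parent); $C_{\mathrm t}(i/(2|t|-2))$ is the height of $\theta_t(i)$ and $Z_{\mathrm t}(i/(2|t|-2))=\ell(\theta_t(i))$, linearly interpolated on $[0,1]$. *)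

theory Defs
  imports "HOL-Probability.Probability" "HOL-Combinatorics.Permutations"
begin

(* Plane trees as finite sets of Ulam-Harris words (nat lists); [] is the root. *)
definition plane_tree :: "nat list set \<Rightarrow> bool" where
  "plane_tree t \<longleftrightarrow> finite t \<and> [] \<in> t \<and> (\<forall>v i. v @ [i] \<in> t \<longrightarrow> v \<in> t)
     \<and> (\<forall>v i j. v @ [i] \<in> t \<and> j < i \<longrightarrow> v @ [j] \<in> t)"

definition nchild :: "nat list set \<Rightarrow> nat list \<Rightarrow> nat" where
  "nchild t v = card {i. v @ [i] \<in> t}"

definition perms :: "nat list set \<Rightarrow> (nat list \<Rightarrow> nat \<Rightarrow> nat) set" where
  "perms t = {\<sigma>. (\<forall>v\<in>t. \<sigma> v permutes {..<nchild t v}) \<and> (\<forall>v. v \<notin> t \<longrightarrow> \<sigma> v = id)}"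

fun perm_word :: "(nat list \<Rightarrow> nat \<Rightarrow> nat) \<Rightarrow> nat list \<Rightarrow> nat list \<Rightarrow> nat list" where
  "perm_word \<sigma> u [] = []"
| "perm_word \<sigma> u (i # w) = \<sigma> u i # perm_word \<sigma> (u @ [i]) w"

definition perm_vertex :: "(nat list \<Rightarrow> nat \<Rightarrow> nat) \<Rightarrow> nat list \<Rightarrow> nat list" where
  "perm_vertex \<sigma> v = perm_word \<sigma> [] v"

definition sym_tree :: "(nat list \<Rightarrow> nat \<Rightarrow> nat) \<Rightarrow> nat list set \<Rightarrow> nat list set" where
  "sym_tree \<sigma> t = perm_vertex \<sigma> ` t"

(* vertex data (types, or displacement of the edge into a vertex) following the vertices *)
definition sym_lab :: "(nat list \<Rightarrow> nat \<Rightarrow> nat) \<Rightarrow> nat list set \<Rightarrow> (nat list \<Rightarrow> 'b) \<Rightarrow> nat list \<Rightarrow> 'b" where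
  "sym_lab \<sigma> t f = (\<lambda>w. f (inv_into t (perm_vertex \<sigma>) w))"

definition typed_shape :: "nat list set \<Rightarrow> (nat list \<Rightarrow> 's) \<Rightarrow> nat list set \<times> (nat list \<Rightarrow> 's)" where
  "typed_shape t ty = (t, \<lambda>v. if v \<in> t then ty v else undefined)"

(* child displacement vector D_v = (D_{v,v0},...,D_{v,v(k-1)}); d w is the displacement of the edge into w *)
definition child_disp :: "nat list set \<Rightarrow> (nat list \<Rightarrow> real) \<Rightarrow> nat list \<Rightarrow> nat \<Rightarrow> real" where
  "child_disp t d v = (\<lambda>i\<in>{..<nchild t v}. d (v @ [i]))"

definition lab :: "(nat list \<Rightarrow> real) \<Rightarrow> nat list \<Rightarrow> real" where
  "lab d v = (\<Sum>j\<in>{1..length v}. d (take j v))"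

fun lcp :: "nat list \<Rightarrow> nat list \<Rightarrow> nat list" where
  "lcp (x # xs) (y # ys) = (if x = y then x # lcp xs ys else [])"
| "lcp _ _ = []"

definition tree_dist :: "nat list \<Rightarrow> nat list \<Rightarrow> nat" where
  "tree_dist u v = length u + length v - 2 * length (lcp u v)"

(* contour exploration (depth-first walk); fuel argument only for termination *)
fun contour_aux :: "nat \<Rightarrow> nat list set \<Rightarrow> nat list \<Rightarrow> nat list list" where
  "contour_aux 0 t v = [v]"
| "contour_aux (Suc m) t v =
     v # concat (map (\<lambda>i. contour_aux m t (v @ [i]) @ [v]) [0..<nchild t v])"

definition theta :: "nat list set \<Rightarrow> nat \<Rightarrow> nat list" where
  "theta t i = contour_aux (card t) t [] ! i"

definition lin_interp :: "nat \<Rightarrow> (nat \<Rightarrow> real) \<Rightarrow> real \<Rightarrow> real" where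
  "lin_interp N f s =
     (if N = 0 then f 0 else
      (let x = s * real N; i = nat \<lfloor>x\<rfloor> in
        if i \<ge> N then f N else f i + (x - real i) * (f (Suc i) - f i)))"

definition contour_fun :: "nat list set \<Rightarrow> real \<Rightarrow> real" where
  "contour_fun t = lin_interp (2 * card t - 2) (\<lambda>i. real (length (theta t i)))"

definition label_fun :: "nat list set \<Rightarrow> (nat list \<Rightarrow> real) \<Rightarrow> real \<Rightarrow> real" where
  "label_fun t d = lin_interp (2 * card t - 2) (\<lambda>i. lab d (theta t i))"

definition random_labeled_tree ::
  "'a measure \<Rightarrow> ('a \<Rightarrow> nat list set) \<Rightarrow> ('a \<Rightarrow> nat list \<Rightarrow> 's) \<Rightarrow> ('a \<Rightarrow> nat list \<Rightarrow> real) \<Rightarrow> bool" where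
  "random_labeled_tree M T ty D \<longleftrightarrow> prob_space M \<and> (\<forall>\<omega>\<in>space M. plane_tree (T \<omega>))
     \<and> (\<forall>s. {\<omega>\<in>space M. typed_shape (T \<omega>) (ty \<omega>) = s} \<in> sets M)
     \<and> (\<forall>v. (\<lambda>\<omega>. D \<omega> v) \<in> borel_measurable M)"

definition shape_event ::
  "'a measure \<Rightarrow> ('a \<Rightarrow> nat list set) \<Rightarrow> ('a \<Rightarrow> nat list \<Rightarrow> 's) \<Rightarrow> nat list set \<times> (nat list \<Rightarrow> 's) \<Rightarrow> 'a set" where
  "shape_event M T ty s = {\<omega>\<in>space M. typed_shape (T \<omega>) (ty \<omega>) = s}"

definition valid_law ::
  "'a measure \<Rightarrow> ('a \<Rightarrow> nat list set) \<Rightarrow> ('a \<Rightarrow> nat list \<Rightarrow> 's) \<Rightarrow> ('a \<Rightarrow> nat list \<Rightarrow> real) \<Rightarrow> bool" where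
  "valid_law M T ty D \<longleftrightarrow> random_labeled_tree M T ty D
   \<comment> \<open>(i) invariance of the law of the multitype tree\<close>
   \<and> (\<forall>t \<tau> \<sigma>. plane_tree t \<longrightarrow> \<sigma> \<in> perms t \<longrightarrow>
        measure M (shape_event M T ty (typed_shape t \<tau>)) =
        measure M (shape_event M T ty (typed_shape (sym_tree \<sigma> t) (sym_lab \<sigma> t \<tau>))))
   \<comment> \<open>(ii) conditional independence of the child displacement vectors given the tree\<close>
   \<and> (\<forall>s. measure M (shape_event M T ty s) > 0 \<longrightarrow>
        prob_space.indep_vars (uniform_measure M (shape_event M T ty s))
          (\<lambda>v. PiM {..<nchild (fst s) v} (\<lambda>_. borel))
          (\<lambda>v \<omega>. child_disp (fst s) (D \<omega>) v) (fst s))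
   \<comment> \<open>(iii) conditional law of D_v depends only on type of v and types of its children\<close>
   \<and> (\<forall>s s' v v'. measure M (shape_event M T ty s) > 0 \<longrightarrow> measure M (shape_event M T ty s') > 0
        \<longrightarrow> v \<in> fst s \<longrightarrow> v' \<in> fst s' \<longrightarrow> snd s v = snd s' v'
        \<longrightarrow> nchild (fst s) v = nchild (fst s') v'
        \<longrightarrow> (\<forall>i < nchild (fst s) v. snd s (v @ [i]) = snd s' (v' @ [i]))
        \<longrightarrow> distr (uniform_measure M (shape_event M T ty s)) (PiM {..<nchild (fst s) v} (\<lambda>_. borel))
              (\<lambda>\<omega>. child_disp (fst s) (D \<omega>) v)
          = distr (uniform_measure M (shape_event M T ty s')) (PiM {..<nchild (fst s') v'} (\<lambda>_. borel))
              (\<lambda>\<omega>. child_disp (fst s') (D \<omega>) v'))"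

(* E[F(T^sym)] where T^sym = sigma(T,D), sigma uniform on P_T given T (law nu^sym) *)
definition sym_expect ::
  "'a measure \<Rightarrow> ('a \<Rightarrow> nat list set) \<Rightarrow> ('a \<Rightarrow> nat list \<Rightarrow> real)
     \<Rightarrow> (nat list set \<Rightarrow> (nat list \<Rightarrow> real) \<Rightarrow> real) \<Rightarrow> real" where
  "sym_expect M T D F =
     (\<integral>\<omega>. (\<Sum>\<sigma>\<in>perms (T \<omega>). F (sym_tree \<sigma> (T \<omega>)) (sym_lab \<sigma> (T \<omega>) (D \<omega>)))
            / real (card (perms (T \<omega>))) \<partial>M)"

definition unif_dist :: "(real \<Rightarrow> real \<times> real) \<Rightarrow> (real \<Rightarrow> real \<times> real) \<Rightarrow> real" where
  "unif_dist f g = (SUP s\<in>{0..1}. dist (f s) (g s))"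

definition bcont_functional :: "((real \<Rightarrow> real \<times> real) \<Rightarrow> real) \<Rightarrow> bool" where
  "bcont_functional G \<longleftrightarrow>
     (\<exists>B. \<forall>f. continuous_on {0..1} f \<longrightarrow> \<bar>G f\<bar> \<le> B) \<and>
     (\<forall>f. continuous_on {0..1} f \<longrightarrow> (\<forall>e>0. \<exists>\<delta>>0. \<forall>g. continuous_on {0..1} g \<and> unif_dist f g < \<delta>
          \<longrightarrow> \<bar>G g - G f\<bar> < e))"

definition cont_process :: "'b measure \<Rightarrow> ('b \<Rightarrow> real \<Rightarrow> real \<times> real) \<Rightarrow> bool" where
  "cont_process N X \<longleftrightarrow> prob_space N \<and> (\<forall>\<omega>\<in>space N. continuous_on {0..1} (X \<omega>))
     \<and> (\<forall>s\<in>{0..1}. (\<lambda>\<omega>. X \<omega> s) \<in> borel_measurable N)"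

end

theory Submission
  imports Defs
begin

lemma perms_bij: "\<sigma> \<in> perms t \<Longrightarrow> bij (\<sigma> v)"
  unfolding perms_def by (cases "v \<in> t") (auto intro: permutes_bij)

lemma perm_word_length[simp]: "length (perm_word \<sigma> u w) = length w"
  by (induction w arbitrary: u) auto

lemma perm_word_append: "perm_word \<sigma> u (w1 @ w2) = perm_word \<sigma> u w1 @ perm_word \<sigma> (u @ w1) w2"
  by (induction w1 arbitrary: u) auto

lemma perm_word_inj:
  assumes "\<And>v. inj (\<sigma> v)"
  shows "perm_word \<sigma> u w1 = perm_word \<sigma> u w2 \<Longrightarrow> w1 = w2"
proof (induction w1 arbitrary: u w2)
  case Nil then show ?case by (cases w2) auto
next
  case (Cons a w1)
  then show ?case using assms by (cases w2) (auto dest: injD)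
qed

lemma perm_vertex_inj: "\<sigma> \<in> perms t \<Longrightarrow> inj (perm_vertex \<sigma>)"
  unfolding perm_vertex_def using perm_word_inj[of \<sigma> "[]"] perms_bij bij_is_inj
  by (metis injI)

lemma perm_vertex_snoc: "perm_vertex \<sigma> (u @ [i]) = perm_vertex \<sigma> u @ [\<sigma> u i]"
  unfolding perm_vertex_def by (simp add: perm_word_append)

lemma perm_vertex_Nil[simp]: "perm_vertex \<sigma> [] = []"
  unfolding perm_vertex_def by simp

lemma perm_vertex_length[simp]: "length (perm_vertex \<sigma> u) = length u"
  unfolding perm_vertex_def by simp

lemma down_closed_nat:
  fixes A :: "nat set"
  assumes "finite A" "\<And>i j. i \<in> A \<Longrightarrow> j < i \<Longrightarrow> j \<in> A"
  shows "A = {..<card A}"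
proof (cases "A = {}")
  case True then show ?thesis by simp
next
  case False
  have "A = {..Max A}"
  proof (intro set_eqI iffI)
    fix x assume "x \<in> A" then show "x \<in> {..Max A}" using assms(1) by simp
  next
    fix x assume "x \<in> {..Max A}"
    then have "x = Max A \<or> x < Max A" by auto
    then show "x \<in> A" using Max_in[OF assms(1) False] assms(2) by blast
  qed
  then show ?thesis by (metis card_atMost lessThan_Suc_atMost)
qed

lemma plane_tree_prefix: "plane_tree t \<Longrightarrow> u @ w \<in> t \<Longrightarrow> u \<in> t"
proof (induction w rule: rev_induct)
  case Nil then show ?case by simp
next
  case (snoc x xs)
  then show ?case unfolding plane_tree_def by (metis append_assoc)
qed

lemma children_eq:
  assumes "plane_tree t"
  shows "{i. u @ [i] \<in> t} = {..<nchild t u}"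
proof -
  have fin: "finite {i. u @ [i] \<in> t}"
  proof -
    have "inj_on (\<lambda>i. u @ [i]) {i. u @ [i] \<in> t}" by (auto simp: inj_on_def)
    moreover have "(\<lambda>i. u @ [i]) ` {i. u @ [i] \<in> t} \<subseteq> t" by auto
    ultimately show ?thesis using assms unfolding plane_tree_def
      by (meson finite_imageD finite_subset)
  qed
  show ?thesis unfolding nchild_def
    by (rule down_closed_nat[OF fin]) (use assms in \<open>auto simp: plane_tree_def\<close>)
qed

lemma child_in: "plane_tree t \<Longrightarrow> (u @ [i] \<in> t) = (i < nchild t u)"
  using children_eq by blast

lemma sigma_image:
  assumes "\<sigma> \<in> perms t" "u \<in> t"
  shows "\<sigma> u ` {..<nchild t u} = {..<nchild t u}"
proof -
  have "\<sigma> u permutes {..<nchild t u}" using assms unfolding perms_def by auto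
  then show ?thesis by (rule permutes_image)
qed

lemma sigma_lt:
  assumes "\<sigma> \<in> perms t" "plane_tree t" "i < nchild t u"
  shows "\<sigma> u i < nchild t u"
proof -
  have "u \<in> t" using assms child_in[of t u i] plane_tree_prefix by blast
  then show ?thesis using sigma_image[OF assms(1)] assms(3) by blast
qed

lemma sym_children:
  assumes pt: "plane_tree t" and s: "\<sigma> \<in> perms t" and u: "u \<in> t"
  shows "(perm_vertex \<sigma> u @ [j] \<in> sym_tree \<sigma> t) = (j < nchild t u)"
proof
  assume "perm_vertex \<sigma> u @ [j] \<in> sym_tree \<sigma> t"
  then obtain u' where u': "u' \<in> t" "perm_vertex \<sigma> u' = perm_vertex \<sigma> u @ [j]"
    unfolding sym_tree_def by auto
  then have "u' \<noteq> []" by (metis perm_vertex_length length_0_conv snoc_eq_iff_butlast)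
  then obtain v i where v: "u' = v @ [i]" by (metis rev_exhaust)
  with u' have "perm_vertex \<sigma> v = perm_vertex \<sigma> u" "\<sigma> v i = j"
    by (auto simp: perm_vertex_snoc)
  then have "v = u" "\<sigma> u i = j" using perm_vertex_inj[OF s] by (auto dest: injD)
  moreover have "i < nchild t u" using u' v \<open>v = u\<close> child_in[OF pt] by auto
  ultimately show "j < nchild t u" using sigma_lt[OF s pt] by blast
next
  assume "j < nchild t u"
  then obtain i where "i < nchild t u" "\<sigma> u i = j"
    using sigma_image[OF s u] by (metis imageE lessThan_iff)
  then have "u @ [i] \<in> t" using child_in[OF pt] by auto
  then show "perm_vertex \<sigma> u @ [j] \<in> sym_tree \<sigma> t"
    unfolding sym_tree_def using \<open>\<sigma> u i = j\<close> by (metis image_eqI perm_vertex_snoc)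
qed

lemma sym_nchild:
  assumes pt: "plane_tree t" and s: "\<sigma> \<in> perms t" and u: "u \<in> t"
  shows "nchild (sym_tree \<sigma> t) (perm_vertex \<sigma> u) = nchild t u"
  unfolding nchild_def[of "sym_tree \<sigma> t"] using sym_children[OF assms] by simp

lemma sym_plane_tree:
  assumes pt: "plane_tree t" and s: "\<sigma> \<in> perms t"
  shows "plane_tree (sym_tree \<sigma> t)"
  unfolding plane_tree_def
proof (intro conjI allI impI)
  show "finite (sym_tree \<sigma> t)" using pt unfolding sym_tree_def plane_tree_def by auto
  show "[] \<in> sym_tree \<sigma> t" using pt unfolding sym_tree_def plane_tree_def
    by (metis image_eqI perm_vertex_Nil)
next
  fix v i assume "v @ [i] \<in> sym_tree \<sigma> t"
  then obtain u' where u': "u' \<in> t" "perm_vertex \<sigma> u' = v @ [i]"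
    unfolding sym_tree_def by auto
  then have "u' \<noteq> []" by (metis perm_vertex_length length_0_conv snoc_eq_iff_butlast)
  then obtain w k where "u' = w @ [k]" by (metis rev_exhaust)
  with u' have "perm_vertex \<sigma> w = v" "w \<in> t"
    using plane_tree_prefix[OF pt] by (auto simp: perm_vertex_snoc)
  then show "v \<in> sym_tree \<sigma> t" unfolding sym_tree_def by auto
next
  fix v i j assume a: "v @ [i] \<in> sym_tree \<sigma> t \<and> j < i"
  then have "v \<in> sym_tree \<sigma> t"
  proof -
    obtain u' where u': "u' \<in> t" "perm_vertex \<sigma> u' = v @ [i]"
      using a unfolding sym_tree_def by auto
    then have "u' \<noteq> []" by (metis perm_vertex_length length_0_conv snoc_eq_iff_butlast)
    then obtain w k where "u' = w @ [k]" by (metis rev_exhaust)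
    with u' have "perm_vertex \<sigma> w = v" "w \<in> t"
      using plane_tree_prefix[OF pt] by (auto simp: perm_vertex_snoc)
    then show ?thesis unfolding sym_tree_def by auto
  qed
  then obtain u where u: "u \<in> t" "v = perm_vertex \<sigma> u" unfolding sym_tree_def by auto
  then show "v @ [j] \<in> sym_tree \<sigma> t" using a sym_children[OF pt s u(1)] by auto
qed

definition bar :: "nat list set \<Rightarrow> (nat list \<Rightarrow> nat \<Rightarrow> nat) \<Rightarrow> (nat list \<Rightarrow> nat \<Rightarrow> nat)" where
  "bar t \<sigma> = (\<lambda>w. if w \<in> sym_tree \<sigma> t then inv (\<sigma> (inv (perm_vertex \<sigma>) w)) else id)"

lemma bar_at:
  assumes s: "\<sigma> \<in> perms t" and u: "u \<in> t"
  shows "bar t \<sigma> (perm_vertex \<sigma> u) = inv (\<sigma> u)"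
  using u perm_vertex_inj[OF s] unfolding bar_def sym_tree_def by simp

lemma bar_perms:
  assumes pt: "plane_tree t" and s: "\<sigma> \<in> perms t"
  shows "bar t \<sigma> \<in> perms (sym_tree \<sigma> t)"
  unfolding perms_def
proof (intro CollectI conjI ballI allI impI)
  fix w assume "w \<in> sym_tree \<sigma> t"
  then obtain u where u: "u \<in> t" "w = perm_vertex \<sigma> u" unfolding sym_tree_def by auto
  have "\<sigma> u permutes {..<nchild t u}" using s u unfolding perms_def by auto
  then have "inv (\<sigma> u) permutes {..<nchild t u}" by (rule permutes_inv)
  then show "bar t \<sigma> w permutes {..<nchild (sym_tree \<sigma> t) w}"
    using bar_at[OF s u(1)] sym_nchild[OF pt s u(1)] u(2) by simp
next
  fix w assume "w \<notin> sym_tree \<sigma> t"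
  then show "bar t \<sigma> w = id" unfolding bar_def by simp
qed

lemma bar_word:
  assumes pt: "plane_tree t" and s: "\<sigma> \<in> perms t"
  shows "u @ w \<in> t \<Longrightarrow> perm_word (bar t \<sigma>) (perm_vertex \<sigma> u) (perm_word \<sigma> u w) = w"
proof (induction w arbitrary: u)
  case Nil then show ?case by simp
next
  case (Cons i w)
  have u: "u \<in> t" using Cons.prems plane_tree_prefix[OF pt] by blast
  have "bar t \<sigma> (perm_vertex \<sigma> u) (\<sigma> u i) = i"
    using bar_at[OF s u] perms_bij[OF s] by (simp add: bij_is_inj)
  moreover have "perm_vertex \<sigma> u @ [\<sigma> u i] = perm_vertex \<sigma> (u @ [i])"
    by (simp add: perm_vertex_snoc)
  moreover have "(u @ [i]) @ w \<in> t" using Cons.prems by simp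
  ultimately show ?case using Cons.IH by simp
qed

lemma bar_vertex:
  assumes pt: "plane_tree t" and s: "\<sigma> \<in> perms t" and v: "v \<in> t"
  shows "perm_vertex (bar t \<sigma>) (perm_vertex \<sigma> v) = v"
  using bar_word[OF pt s, of "[]" v] v unfolding perm_vertex_def by simp

lemma bar_tree:
  assumes pt: "plane_tree t" and s: "\<sigma> \<in> perms t"
  shows "sym_tree (bar t \<sigma>) (sym_tree \<sigma> t) = t"
  unfolding sym_tree_def[of "bar t \<sigma>"] unfolding sym_tree_def image_image
  using bar_vertex[OF pt s] by simp

lemma bar_bar:
  assumes pt: "plane_tree t" and s: "\<sigma> \<in> perms t"
  shows "bar (sym_tree \<sigma> t) (bar t \<sigma>) = \<sigma>"
proof
  fix v
  have bs: "bar t \<sigma> \<in> perms (sym_tree \<sigma> t)" by (rule bar_perms[OF pt s])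
  show "bar (sym_tree \<sigma> t) (bar t \<sigma>) v = \<sigma> v"
  proof (cases "v \<in> t")
    case True
    have "bar (sym_tree \<sigma> t) (bar t \<sigma>) v = bar (sym_tree \<sigma> t) (bar t \<sigma>) (perm_vertex (bar t \<sigma>) (perm_vertex \<sigma> v))"
      using bar_vertex[OF pt s True] by simp
    also have "\<dots> = inv (bar t \<sigma> (perm_vertex \<sigma> v))"
      by (rule bar_at[OF bs]) (use True in \<open>auto simp: sym_tree_def\<close>)
    also have "\<dots> = inv (inv (\<sigma> v))" using bar_at[OF s True] by simp
    also have "\<dots> = \<sigma> v" using perms_bij[OF s] by (simp add: inv_inv_eq)
    finally show ?thesis .
  next
    case False
    then have "v \<notin> sym_tree (bar t \<sigma>) (sym_tree \<sigma> t)" using bar_tree[OF pt s] by simp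
    then show ?thesis using False s unfolding bar_def perms_def by auto
  qed
qed

lemma perms_id: "(\<lambda>_. id) \<in> perms t"
  unfolding perms_def by (auto intro: permutes_id)

lemma perms_finite:
  assumes pt: "plane_tree t"
  shows "finite (perms t)"
proof -
  have ft: "finite t" using pt unfolding plane_tree_def by auto
  let ?E = "\<lambda>f v. if v \<in> t then f v else id"
  have "perms t \<subseteq> ?E ` (PiE t (\<lambda>v. {p. p permutes {..<nchild t v}}))"
  proof
    fix \<sigma> assume s: "\<sigma> \<in> perms t"
    have "\<sigma> = ?E (restrict \<sigma> t)" using s unfolding perms_def by auto
    moreover have "restrict \<sigma> t \<in> PiE t (\<lambda>v. {p. p permutes {..<nchild t v}})"
      using s unfolding perms_def by auto
    ultimately show "\<sigma> \<in> ?E ` (PiE t (\<lambda>v. {p. p permutes {..<nchild t v}}))" by blast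
  qed
  moreover have "finite (PiE t (\<lambda>v. {p. p permutes {..<nchild t v}}))"
    using ft by (intro finite_PiE) (auto intro: finite_permutations)
  ultimately show ?thesis by (meson finite_imageI finite_subset)
qed

lemma perms_card_pos: "plane_tree t \<Longrightarrow> card (perms t) > 0"
  using perms_finite perms_id by (metis card_gt_0_iff empty_iff)

lemma perms_card_sym:
  assumes pt: "plane_tree t" and s: "\<sigma> \<in> perms t"
  shows "card (perms (sym_tree \<sigma> t)) = card (perms t)"
proof -
  let ?P = "perm_vertex \<sigma>"
  have inj: "inj ?P" by (rule perm_vertex_inj[OF s])
  let ?f = "\<lambda>\<rho>. (\<lambda>w. if w \<in> sym_tree \<sigma> t then \<rho> (inv ?P w) else id)"
  let ?g = "\<lambda>\<rho>. (\<lambda>u. if u \<in> t then \<rho> (?P u) else id)"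
  have "bij_betw ?f (perms t) (perms (sym_tree \<sigma> t))"
  proof (rule bij_betw_byWitness[where f' = ?g])
    show "\<forall>a\<in>perms t. ?g (?f a) = a"
    proof
      fix \<rho> assume r: "\<rho> \<in> perms t"
      show "?g (?f \<rho>) = \<rho>"
      proof
        fix u show "?g (?f \<rho>) u = \<rho> u"
          using r inj unfolding perms_def sym_tree_def by auto
      qed
    qed
    show "\<forall>a'\<in>perms (sym_tree \<sigma> t). ?f (?g a') = a'"
    proof
      fix \<rho> assume r: "\<rho> \<in> perms (sym_tree \<sigma> t)"
      show "?f (?g \<rho>) = \<rho>"
      proof
        fix w show "?f (?g \<rho>) w = \<rho> w"
        proof (cases "w \<in> sym_tree \<sigma> t")
          case True
          then obtain u where "u \<in> t" "w = ?P u" unfolding sym_tree_def by auto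
          then show ?thesis using inj by (auto simp: sym_tree_def)
        next
          case False then show ?thesis using r unfolding perms_def by auto
        qed
      qed
    qed
    show "?f ` perms t \<subseteq> perms (sym_tree \<sigma> t)"
    proof
      fix x assume "x \<in> ?f ` perms t"
      then obtain \<rho> where r: "\<rho> \<in> perms t" and x: "x = ?f \<rho>" by auto
      show "x \<in> perms (sym_tree \<sigma> t)" unfolding perms_def
      proof (intro CollectI conjI ballI allI impI)
        fix w assume "w \<in> sym_tree \<sigma> t"
        then obtain u where u: "u \<in> t" "w = ?P u" unfolding sym_tree_def by auto
        then show "x w permutes {..<nchild (sym_tree \<sigma> t) w}"
          using r inj sym_nchild[OF pt s u(1)] unfolding x perms_def by (auto simp: sym_tree_def)
      next
        fix w assume "w \<notin> sym_tree \<sigma> t" then show "x w = id" unfolding x by simp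
      qed
    qed
    show "?g ` perms (sym_tree \<sigma> t) \<subseteq> perms t"
    proof
      fix x assume "x \<in> ?g ` perms (sym_tree \<sigma> t)"
      then obtain \<rho> where r: "\<rho> \<in> perms (sym_tree \<sigma> t)" and x: "x = ?g \<rho>" by auto
      show "x \<in> perms t" unfolding perms_def
      proof (intro CollectI conjI ballI allI impI)
        fix u assume u: "u \<in> t"
        have "?P u \<in> sym_tree \<sigma> t" using u unfolding sym_tree_def by auto
        then show "x u permutes {..<nchild t u}"
          using r u sym_nchild[OF pt s u] unfolding x perms_def by auto
      next
        fix u assume "u \<notin> t" then show "x u = id" unfolding x by simp
      qed
    qed
  qed
  then show ?thesis by (simp add: bij_betw_same_card)
qed


definition act :: "(nat list \<Rightarrow> nat \<Rightarrow> nat) \<Rightarrow> nat list set \<times> (nat list \<Rightarrow> 's) \<Rightarrow> nat list set \<times> (nat list \<Rightarrow> 's)" where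
  "act \<sigma> s = typed_shape (sym_tree \<sigma> (fst s)) (sym_lab \<sigma> (fst s) (snd s))"

definition Ush :: "(nat list set \<times> (nat list \<Rightarrow> 's)) set" where
  "Ush = {typed_shape t \<tau> | t \<tau>. plane_tree t}"

lemma fst_typed_shape[simp]: "fst (typed_shape t \<tau>) = t"
  by (simp add: typed_shape_def)

lemma fst_act[simp]: "fst (act \<sigma> s) = sym_tree \<sigma> (fst s)"
  by (simp add: act_def)

lemma Ush_plane: "s \<in> Ush \<Longrightarrow> plane_tree (fst s)"
  unfolding Ush_def by auto

lemma act_typed:
  assumes s: "\<sigma> \<in> perms t"
  shows "act \<sigma> (typed_shape t \<tau>) = typed_shape (sym_tree \<sigma> t) (sym_lab \<sigma> t \<tau>)"
proof -
  have "\<And>w. w \<in> sym_tree \<sigma> t \<Longrightarrow> inv_into t (perm_vertex \<sigma>) w \<in> t"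
    unfolding sym_tree_def by (rule inv_into_into)
  then show ?thesis unfolding act_def typed_shape_def sym_lab_def by (auto simp: fun_eq_iff)
qed

lemma act_U: "s \<in> Ush \<Longrightarrow> \<sigma> \<in> perms (fst s) \<Longrightarrow> act \<sigma> s \<in> Ush"
  unfolding Ush_def act_def using sym_plane_tree by fastforce

lemma act_bar:
  assumes U: "s \<in> Ush" and s: "\<sigma> \<in> perms (fst s)"
  shows "act (bar (fst s) \<sigma>) (act \<sigma> s) = s"
proof -
  obtain t \<tau> where st: "s = typed_shape t \<tau>" and pt: "plane_tree t" using U unfolding Ush_def by auto
  have s': "\<sigma> \<in> perms t" using s st by simp
  let ?P = "perm_vertex \<sigma>" and ?Q = "perm_vertex (bar t \<sigma>)"
  have injP: "inj ?P" by (rule perm_vertex_inj[OF s'])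
  have injQ: "inj ?Q" by (rule perm_vertex_inj[OF bar_perms[OF pt s']])
  have "act (bar t \<sigma>) (act \<sigma> (typed_shape t \<tau>)) =
     typed_shape (sym_tree (bar t \<sigma>) (sym_tree \<sigma> t)) (sym_lab (bar t \<sigma>) (sym_tree \<sigma> t) (sym_lab \<sigma> t \<tau>))"
    by (subst act_typed[OF s'], subst act_typed[OF bar_perms[OF pt s']], rule refl)
  also have "\<dots> = typed_shape t \<tau>"
  proof -
    have "sym_lab (bar t \<sigma>) (sym_tree \<sigma> t) (sym_lab \<sigma> t \<tau>) v = \<tau> v" if v: "v \<in> t" for v
    proof -
      have "?P v \<in> sym_tree \<sigma> t" using v by (simp add: sym_tree_def)
      then have "inv_into (sym_tree \<sigma> t) ?Q v = ?P v"
        using bar_vertex[OF pt s' v] inv_into_f_eq[OF inj_on_subset[OF injQ subset_UNIV]] by blast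
      moreover have "inv_into t ?P (?P v) = v" using v inv_into_f_f[OF inj_on_subset[OF injP subset_UNIV]] by blast
      ultimately show ?thesis unfolding sym_lab_def by simp
    qed
    then show ?thesis using bar_tree[OF pt s'] unfolding typed_shape_def by (auto simp: fun_eq_iff)
  qed
  finally show ?thesis using st by simp
qed

lemma Ush_undef: "s \<in> Ush \<Longrightarrow> v \<notin> fst s \<Longrightarrow> snd s v = undefined"
  unfolding Ush_def typed_shape_def by auto

lemma countable_Ush: "countable (Ush :: (nat list set \<times> (nat list \<Rightarrow> 's::countable)) set)"
proof -
  define enc :: "nat list set \<times> (nat list \<Rightarrow> 's) \<Rightarrow> (nat list \<times> 's) set" where
    "enc s = (\<lambda>v. (v, snd s v)) ` fst s" for s
  have "enc ` Ush \<subseteq> Collect finite"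
    unfolding enc_def Ush_def plane_tree_def by auto
  then have "countable (enc ` Ush)" using countable_Collect_finite countable_subset by blast
  moreover have "inj_on enc Ush"
  proof (rule inj_onI)
    fix x y assume x: "x \<in> Ush" and y: "y \<in> Ush" and e: "enc x = enc y"
    have f: "fst x = fst y"
    proof -
      have "fst ` enc x = fst x" "fst ` enc y = fst y" unfolding enc_def by (auto simp: image_image)
      then show ?thesis using e by metis
    qed
    have "snd x v = snd y v" for v
    proof (cases "v \<in> fst x")
      case True
      then have "(v, snd x v) \<in> enc y" using e unfolding enc_def by auto
      then show ?thesis unfolding enc_def by auto
    next
      case False
      have "v \<notin> fst y" using False f by simp
      then show ?thesis using Ush_undef[OF x False] Ush_undef[OF y] by simp
    qed
    then show "x = y" using f by (simp add: prod_eq_iff fun_eq_iff)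
  qed
  ultimately show ?thesis by (rule countable_image_inj_on)
qed

lemma nn_integral_count_space_Sigma:
  fixes f :: "'a \<times> 'b \<Rightarrow> ennreal"
  assumes A: "countable A" and B: "\<And>a. a \<in> A \<Longrightarrow> finite (B a)"
  shows "(\<integral>\<^sup>+p. f p \<partial>count_space (Sigma A B)) = (\<integral>\<^sup>+a. (\<Sum>b\<in>B a. f (a,b)) \<partial>count_space A)"
proof -
  have "(\<integral>\<^sup>+p. f p \<partial>count_space (Sigma A B)) =
      (\<integral>\<^sup>+p. (\<integral>\<^sup>+a. f p * indicator {fst p} a \<partial>count_space A) \<partial>count_space (Sigma A B))"
  proof (rule nn_integral_cong)
    fix p assume "p \<in> space (count_space (Sigma A B))"
    then have p: "fst p \<in> A" by auto
    have "(\<integral>\<^sup>+a. f p * indicator {fst p} a \<partial>count_space A) = (\<Sum>a\<in>{fst p}. f p * indicator {fst p} a)"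
      by (rule nn_integral_count_space') (use p in auto)
    then show "f p = (\<integral>\<^sup>+a. f p * indicator {fst p} a \<partial>count_space A)" by simp
  qed
  also have "\<dots> = (\<integral>\<^sup>+a. (\<integral>\<^sup>+p. f p * indicator {fst p} a \<partial>count_space (Sigma A B)) \<partial>count_space A)"
    by (rule nn_integral_count_space_nn_integral[OF A]) simp
  also have "\<dots> = (\<integral>\<^sup>+a. (\<Sum>b\<in>B a. f (a,b)) \<partial>count_space A)"
  proof (rule nn_integral_cong)
    fix a assume "a \<in> space (count_space A)"
    then have a: "a \<in> A" by simp
    have "(\<integral>\<^sup>+p. f p * indicator {fst p} a \<partial>count_space (Sigma A B)) =
        (\<Sum>p\<in>Pair a ` B a. f p * indicator {fst p} a)"
      by (rule nn_integral_count_space') (use a B in \<open>auto split: split_indicator\<close>)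
    also have "\<dots> = (\<Sum>b\<in>B a. f (a,b))"
      by (subst sum.reindex) (auto simp: inj_on_def)
    finally show "(\<integral>\<^sup>+p. f p * indicator {fst p} a \<partial>count_space (Sigma A B)) = (\<Sum>b\<in>B a. f (a,b))" .
  qed
  finally show ?thesis .
qed

lemma sum_sym:
  fixes q :: "nat list set \<times> (nat list \<Rightarrow> 's::countable) \<Rightarrow> ennreal" and h :: "nat list set \<Rightarrow> real"
  assumes q: "\<And>s \<sigma>. s \<in> Ush \<Longrightarrow> \<sigma> \<in> perms (fst s) \<Longrightarrow> q (act \<sigma> s) = q s"
    and h: "\<And>t. 0 \<le> h t"
  shows "(\<integral>\<^sup>+s. q s * ennreal (h (fst s)) \<partial>count_space Ush) =
    (\<integral>\<^sup>+s. q s * ennreal ((\<Sum>\<sigma>\<in>perms (fst s). h (sym_tree \<sigma> (fst s))) / real (card (perms (fst s)))) \<partial>count_space Ush)"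
proof -
  let ?U = "Ush :: (nat list set \<times> (nat list \<Rightarrow> 's)) set"
  let ?Sig = "SIGMA s:(Ush :: (nat list set \<times> (nat list \<Rightarrow> 's)) set). perms (fst s)"
  define F where "F (p :: (nat list set \<times> (nat list \<Rightarrow> 's)) \<times> (nat list \<Rightarrow> nat \<Rightarrow> nat)) = q (fst p) * ennreal (h (sym_tree (snd p) (fst (fst p))) / real (card (perms (fst (fst p)))))" for p
  define G where "G (p :: (nat list set \<times> (nat list \<Rightarrow> 's)) \<times> (nat list \<Rightarrow> nat \<Rightarrow> nat)) = q (fst p) * ennreal (h (fst (fst p)) / real (card (perms (fst (fst p)))))" for p
  define \<Phi> where "\<Phi> (p :: (nat list set \<times> (nat list \<Rightarrow> 's)) \<times> (nat list \<Rightarrow> nat \<Rightarrow> nat)) = (act (snd p) (fst p), bar (fst (fst p)) (snd p))" for p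
  have fin: "\<And>s. s \<in> Ush \<Longrightarrow> finite (perms (fst s))" using perms_finite Ush_plane by blast
  have cnt: "countable (Ush :: (nat list set \<times> (nat list \<Rightarrow> 's)) set)" by (rule countable_Ush)
  have PhiS: "\<Phi> p \<in> ?Sig" if pin: "p \<in> ?Sig" for p
  proof -
    obtain s \<sigma> where p: "p = (s, \<sigma>)" "s \<in> Ush" "\<sigma> \<in> perms (fst s)" by (rule SigmaE[OF pin]) blast
    have pt: "plane_tree (fst s)" using Ush_plane[OF p(2)] .
    show ?thesis using p act_U[OF p(2,3)] bar_perms[OF pt p(3)] unfolding \<Phi>_def by simp
  qed
  have PhiPhi: "\<Phi> (\<Phi> p) = p" if pin: "p \<in> ?Sig" for p
  proof -
    obtain s \<sigma> where p: "p = (s, \<sigma>)" "s \<in> Ush" "\<sigma> \<in> perms (fst s)" by (rule SigmaE[OF pin]) blast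
    have pt: "plane_tree (fst s)" using Ush_plane[OF p(2)] .
    show ?thesis using p act_bar[OF p(2,3)] bar_bar[OF pt p(3)] unfolding \<Phi>_def by simp
  qed
  have bij: "bij_betw \<Phi> ?Sig ?Sig"
    by (rule bij_betw_byWitness[where f'=\<Phi>]) (use PhiS PhiPhi in \<open>blast+\<close>)
  have FPhi: "F (\<Phi> p) = G p" if pin: "p \<in> ?Sig" for p
  proof -
    obtain s \<sigma> where p: "p = (s, \<sigma>)" "s \<in> Ush" "\<sigma> \<in> perms (fst s)" by (rule SigmaE[OF pin]) blast
    have pt: "plane_tree (fst s)" using Ush_plane[OF p(2)] .
    show ?thesis unfolding F_def G_def \<Phi>_def using p q[of s \<sigma>] bar_tree[OF pt p(3)] perms_card_sym[OF pt p(3)]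
      by simp
  qed
  have "(\<integral>\<^sup>+s. q s * ennreal ((\<Sum>\<sigma>\<in>perms (fst s). h (sym_tree \<sigma> (fst s))) / real (card (perms (fst s)))) \<partial>count_space ?U)
     = (\<integral>\<^sup>+s. (\<Sum>\<sigma>\<in>perms (fst s). F (s, \<sigma>)) \<partial>count_space ?U)"
  proof (rule nn_integral_cong)
    fix s assume "s \<in> space (count_space ?U)"
    have "(\<Sum>\<sigma>\<in>perms (fst s). F (s, \<sigma>)) = q s * (\<Sum>\<sigma>\<in>perms (fst s). ennreal (h (sym_tree \<sigma> (fst s)) / real (card (perms (fst s)))))"
      unfolding F_def by (simp add: sum_distrib_left)
    also have "\<dots> = q s * ennreal (\<Sum>\<sigma>\<in>perms (fst s). h (sym_tree \<sigma> (fst s)) / real (card (perms (fst s))))"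
      using h by (subst sum_ennreal) auto
    also have "\<dots> = q s * ennreal ((\<Sum>\<sigma>\<in>perms (fst s). h (sym_tree \<sigma> (fst s))) / real (card (perms (fst s))))"
      by (simp add: sum_divide_distrib)
    finally show "q s * ennreal ((\<Sum>\<sigma>\<in>perms (fst s). h (sym_tree \<sigma> (fst s))) / real (card (perms (fst s))))
       = (\<Sum>\<sigma>\<in>perms (fst s). F (s, \<sigma>))" by simp
  qed
  also have "\<dots> = (\<integral>\<^sup>+p. F p \<partial>count_space ?Sig)"
    by (rule nn_integral_count_space_Sigma[OF cnt fin, symmetric])
  also have "\<dots> = (\<integral>\<^sup>+p. F (\<Phi> p) \<partial>count_space ?Sig)"
    by (rule nn_integral_bij_count_space[OF bij, symmetric])
  also have "\<dots> = (\<integral>\<^sup>+p. G p \<partial>count_space ?Sig)"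
    by (rule nn_integral_cong) (simp add: FPhi)
  also have "\<dots> = (\<integral>\<^sup>+s. (\<Sum>\<sigma>\<in>perms (fst s). G (s, \<sigma>)) \<partial>count_space ?U)"
    by (rule nn_integral_count_space_Sigma[OF cnt fin])
  also have "\<dots> = (\<integral>\<^sup>+s. q s * ennreal (h (fst s)) \<partial>count_space ?U)"
  proof (rule nn_integral_cong)
    fix s assume "s \<in> space (count_space ?U)"
    then have s: "s \<in> Ush" by simp
    have c: "real (card (perms (fst s))) > 0" using perms_card_pos[OF Ush_plane[OF s]] by simp
    have "(\<Sum>\<sigma>\<in>perms (fst s). G (s, \<sigma>)) = of_nat (card (perms (fst s))) * (q s * ennreal (h (fst s) / real (card (perms (fst s)))))"
      unfolding G_def by simp
    also have "\<dots> = q s * (ennreal (real (card (perms (fst s)))) * ennreal (h (fst s) / real (card (perms (fst s)))))"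
      by (simp add: ennreal_of_nat_eq_real_of_nat mult.commute mult.left_commute)
    also have "\<dots> = q s * ennreal (h (fst s))"
      using c h by (simp add: ennreal_mult'[symmetric])
    finally show "(\<Sum>\<sigma>\<in>perms (fst s). G (s, \<sigma>)) = q s * ennreal (h (fst s))" .
  qed
  finally show ?thesis by simp
qed


lemma transfer:
  fixes M :: "'a measure" and T :: "'a \<Rightarrow> nat list set" and ty :: "'a \<Rightarrow> nat list \<Rightarrow> 's::countable"
    and h :: "nat list set \<Rightarrow> real"
  assumes valid: "valid_law M T ty D"
    and h0: "\<And>t. 0 \<le> h t" and h1: "\<And>t. h t \<le> 1"
  shows "(\<integral>\<omega>. (\<Sum>\<sigma>\<in>perms (T \<omega>). h (sym_tree \<sigma> (T \<omega>))) / real (card (perms (T \<omega>))) \<partial>M) = (\<integral>\<omega>. h (T \<omega>) \<partial>M)"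
proof -
  let ?U = "Ush :: (nat list set \<times> (nat list \<Rightarrow> 's)) set"
  define shp where "shp \<omega> = typed_shape (T \<omega>) (ty \<omega>)" for \<omega>
  define E where "E s = shape_event M T ty s" for s
  define q where "q s = emeasure M (E s)" for s
  have rlt: "random_labeled_tree M T ty D" using valid unfolding valid_law_def by auto
  then have ps: "prob_space M" and pt: "\<And>\<omega>. \<omega> \<in> space M \<Longrightarrow> plane_tree (T \<omega>)"
    and Es: "\<And>s. E s \<in> sets M"
    unfolding random_labeled_tree_def E_def shape_event_def by auto
  interpret prob_space M by (rule ps)
  have inv: "\<And>t \<tau> \<sigma>. plane_tree t \<Longrightarrow> \<sigma> \<in> perms t \<Longrightarrow>
        measure M (E (typed_shape t \<tau>)) = measure M (E (typed_shape (sym_tree \<sigma> t) (sym_lab \<sigma> t \<tau>)))"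
    using valid unfolding valid_law_def E_def by blast
  have qinv: "q (act \<sigma> s) = q s" if s: "s \<in> ?U" and sg: "\<sigma> \<in> perms (fst s)" for s \<sigma>
  proof -
    obtain t \<tau> where st: "s = typed_shape t \<tau>" and ptt: "plane_tree t" using s unfolding Ush_def by auto
    have sg': "\<sigma> \<in> perms t" using sg st by simp
    show ?thesis unfolding q_def st act_typed[OF sg'] using inv[OF ptt sg', of \<tau>]
      by (simp add: emeasure_eq_measure)
  qed
  have shpU: "shp \<omega> \<in> ?U" if "\<omega> \<in> space M" for \<omega>
    using pt[OF that] unfolding shp_def Ush_def by auto
  have shp_meas: "shp \<in> measurable M (count_space ?U)"
    unfolding measurable_count_space_eq_countable[OF countable_Ush]
  proof (intro conjI ballI)
    show "shp \<in> space M \<rightarrow> ?U" using shpU by auto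
    fix a assume "a \<in> ?U"
    have "shp -` {a} \<inter> space M = E a" unfolding E_def shape_event_def shp_def by auto
    then show "shp -` {a} \<inter> space M \<in> sets M" using Es by simp
  qed
  have A: "(\<integral>\<^sup>+\<omega>. ennreal (g (shp \<omega>)) \<partial>M) = (\<integral>\<^sup>+s. q s * ennreal (g s) \<partial>count_space ?U)" for g :: "_ \<Rightarrow> real"
  proof -
    have "(\<integral>\<^sup>+\<omega>. ennreal (g (shp \<omega>)) \<partial>M) = (\<integral>\<^sup>+\<omega>. (\<integral>\<^sup>+s. ennreal (g s) * indicator (E s) \<omega> \<partial>count_space ?U) \<partial>M)"
    proof (rule nn_integral_cong)
      fix \<omega> assume w: "\<omega> \<in> space M"
      have "(\<integral>\<^sup>+s. ennreal (g s) * indicator (E s) \<omega> \<partial>count_space ?U) = (\<Sum>s\<in>{shp \<omega>}. ennreal (g s) * indicator (E s) \<omega>)"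
        by (rule nn_integral_count_space') (use w shpU in \<open>auto simp: E_def shape_event_def shp_def split: split_indicator\<close>)
      also have "\<dots> = ennreal (g (shp \<omega>))" using w by (simp add: E_def shape_event_def shp_def)
      finally show "ennreal (g (shp \<omega>)) = (\<integral>\<^sup>+s. ennreal (g s) * indicator (E s) \<omega> \<partial>count_space ?U)" by simp
    qed
    also have "\<dots> = (\<integral>\<^sup>+s. (\<integral>\<^sup>+\<omega>. ennreal (g s) * indicator (E s) \<omega> \<partial>M) \<partial>count_space ?U)"
      by (rule nn_integral_count_space_nn_integral[OF countable_Ush]) (use Es in simp)
    also have "\<dots> = (\<integral>\<^sup>+s. q s * ennreal (g s) \<partial>count_space ?U)"
      by (rule nn_integral_cong) (simp add: nn_integral_cmult_indicator Es q_def mult.commute)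
    finally show ?thesis .
  qed
  define g1 where "g1 s = h (fst s)" for s :: "nat list set \<times> (nat list \<Rightarrow> 's)"
  define g2 where "g2 s = (\<Sum>\<sigma>\<in>perms (fst s). h (sym_tree \<sigma> (fst s))) / real (card (perms (fst s)))"
    for s :: "nat list set \<times> (nat list \<Rightarrow> 's)"
  have Tshp: "T \<omega> = fst (shp \<omega>)" for \<omega> unfolding shp_def by simp
  have g1m: "(\<lambda>\<omega>. g1 (shp \<omega>)) \<in> borel_measurable M"
    by (rule measurable_compose[OF shp_meas]) simp
  have g2m: "(\<lambda>\<omega>. g2 (shp \<omega>)) \<in> borel_measurable M"
    by (rule measurable_compose[OF shp_meas]) simp
  have g2nn: "0 \<le> g2 s" for s unfolding g2_def using h0 by (auto intro!: divide_nonneg_nonneg sum_nonneg)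
  have "(\<integral>\<omega>. h (T \<omega>) \<partial>M) = (\<integral>\<omega>. g1 (shp \<omega>) \<partial>M)" unfolding g1_def Tshp ..
  also have "\<dots> = enn2real (\<integral>\<^sup>+\<omega>. ennreal (g1 (shp \<omega>)) \<partial>M)"
    by (rule integral_eq_nn_integral[OF g1m]) (simp add: g1_def h0)
  also have "\<dots> = enn2real (\<integral>\<^sup>+s. q s * ennreal (g1 s) \<partial>count_space ?U)" by (simp add: A)
  also have "\<dots> = enn2real (\<integral>\<^sup>+s. q s * ennreal (g2 s) \<partial>count_space ?U)"
    unfolding g1_def g2_def by (subst sum_sym[OF qinv h0]) auto
  also have "\<dots> = enn2real (\<integral>\<^sup>+\<omega>. ennreal (g2 (shp \<omega>)) \<partial>M)" by (simp add: A)
  also have "\<dots> = (\<integral>\<omega>. g2 (shp \<omega>) \<partial>M)"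
    by (rule integral_eq_nn_integral[OF g2m, symmetric]) (simp add: g2nn)
  also have "\<dots> = (\<integral>\<omega>. (\<Sum>\<sigma>\<in>perms (T \<omega>). h (sym_tree \<sigma> (T \<omega>))) / real (card (perms (T \<omega>))) \<partial>M)"
    unfolding g2_def Tshp ..
  finally show ?thesis ..
qed


definition adj :: "nat list \<Rightarrow> nat list \<Rightarrow> bool" where
  "adj u w \<longleftrightarrow> (\<exists>x. w = u @ [x]) \<or> (\<exists>x. u = w @ [x])"

lemma concat_chain:
  assumes "\<And>i. i \<in> set is \<Longrightarrow> f i \<noteq> [] \<and> successively adj (f i) \<and> adj v (hd (f i)) \<and> last (f i) = v"
  shows "successively adj (v # concat (map f is)) \<and> last (v # concat (map f is)) = v"
  using assms
proof (induction "is")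
  case Nil then show ?case by simp
next
  case (Cons i "is")
  let ?r = "concat (map f is)"
  have IH: "successively adj (v # ?r)" "last (v # ?r) = v" using Cons by auto
  have fi: "f i \<noteq> []" "successively adj (f i)" "adj v (hd (f i))" "last (f i) = v" using Cons.prems by auto
  have "successively adj ((v # f i) @ ?r)"
  proof -
    have "successively adj (v # f i)" using fi by (simp add: successively_Cons)
    moreover have "successively adj ?r" using IH(1) by (metis successively.simps(1) successively_Cons)
    moreover have "?r = [] \<or> adj (last (v # f i)) (hd ?r)" using IH(1) fi(1,4) by (auto simp: successively_Cons)
    ultimately show ?thesis using successively_append_iff[of adj "v # f i" ?r] by blast
  qed
  moreover have "last ((v # f i) @ ?r) = v"
  proof (cases "?r = []")
    case True then show ?thesis using fi(1,4) by (metis append.right_neutral last_ConsR)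
  next
    case False then show ?thesis using IH(2) by (metis last_ConsR last_appendR)
  qed
  ultimately show ?case by simp
qed

lemma contour_chain:
  "contour_aux m t v \<noteq> [] \<and> successively adj (contour_aux m t v) \<and> hd (contour_aux m t v) = v \<and> last (contour_aux m t v) = v"
proof (induction m arbitrary: v)
  case 0 then show ?case by simp
next
  case (Suc m)
  let ?f = "\<lambda>i. contour_aux m t (v @ [i]) @ [v]"
  have "\<And>i. ?f i \<noteq> [] \<and> successively adj (?f i) \<and> adj v (hd (?f i)) \<and> last (?f i) = v"
  proof -
    fix i
    have c: "contour_aux m t (v @ [i]) \<noteq> []" "successively adj (contour_aux m t (v @ [i]))"
      "hd (contour_aux m t (v @ [i])) = v @ [i]" "last (contour_aux m t (v @ [i])) = v @ [i]"
      using Suc.IH[of "v @ [i]"] by auto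
    show "?f i \<noteq> [] \<and> successively adj (?f i) \<and> adj v (hd (?f i)) \<and> last (?f i) = v"
      using c by (auto simp: successively_append_iff adj_def)
  qed
  then have "successively adj (v # concat (map ?f [0..<nchild t v])) \<and> last (v # concat (map ?f [0..<nchild t v])) = v"
    by (intro concat_chain) auto
  then show ?case by simp
qed

definition sub :: "nat list set \<Rightarrow> nat list \<Rightarrow> nat list set" where
  "sub t v = {w \<in> t. \<exists>x. w = v @ x}"

lemma sub_decomp:
  assumes pt: "plane_tree t" and v: "v \<in> t"
  shows "sub t v = insert v (\<Union>i<nchild t v. sub t (v @ [i]))"
proof (intro set_eqI iffI)
  fix w assume "w \<in> sub t v"
  then obtain x where w: "w \<in> t" "w = v @ x" unfolding sub_def by auto
  show "w \<in> insert v (\<Union>i<nchild t v. sub t (v @ [i]))"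
  proof (cases x)
    case Nil then show ?thesis using w by simp
  next
    case (Cons i y)
    then have "(v @ [i]) @ y \<in> t" using w by simp
    then have "v @ [i] \<in> t" using plane_tree_prefix[OF pt] by blast
    then have "i < nchild t v" using child_in[OF pt] by simp
    then show ?thesis using w Cons unfolding sub_def by auto
  qed
next
  fix w assume "w \<in> insert v (\<Union>i<nchild t v. sub t (v @ [i]))"
  then show "w \<in> sub t v" using v unfolding sub_def by auto
qed

lemma contour_length:
  assumes pt: "plane_tree t"
  shows "v \<in> t \<Longrightarrow> (\<forall>w\<in>sub t v. length w \<le> length v + m) \<Longrightarrow>
    length (contour_aux m t v) = 2 * card (sub t v) - 1"
proof (induction m arbitrary: v)
  case 0
  have "sub t v = {v}" using 0 unfolding sub_def by auto
  then show ?case by simp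
next
  case (Suc m)
  have ft: "finite t" using pt unfolding plane_tree_def by simp
  have fs: "\<And>u. finite (sub t u)" using ft unfolding sub_def by simp
  have ch: "\<And>i. i < nchild t v \<Longrightarrow> v @ [i] \<in> t" using child_in[OF pt] by simp
  have IH: "length (contour_aux m t (v @ [i])) = 2 * card (sub t (v @ [i])) - 1" if i: "i < nchild t v" for i
  proof (rule Suc.IH)
    show "v @ [i] \<in> t" using ch[OF i] .
    show "\<forall>w\<in>sub t (v @ [i]). length w \<le> length (v @ [i]) + m"
      using Suc.prems(2) unfolding sub_def by fastforce
  qed
  have pos: "card (sub t (v @ [i])) \<ge> 1" if i: "i < nchild t v" for i
    using ch[OF i] fs[of "v @ [i]"] unfolding sub_def by (metis (mono_tags, lifting) One_nat_def Suc_leI append_Nil2 card_gt_0_iff emptyE mem_Collect_eq)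
  have "length (contour_aux (Suc m) t v) = 1 + (\<Sum>i<nchild t v. length (contour_aux m t (v @ [i])) + 1)"
    by (simp add: length_concat comp_def interv_sum_list_conv_sum_set_nat atLeast0LessThan)
  also have "\<dots> = 1 + (\<Sum>i<nchild t v. 2 * card (sub t (v @ [i])))"
  proof -
    have "length (contour_aux m t (v @ [i])) + 1 = 2 * card (sub t (v @ [i]))" if "i < nchild t v" for i
      using IH[OF that] pos[OF that] by simp
    then show ?thesis by (intro arg_cong[where f="\<lambda>x. 1 + x"] sum.cong) auto
  qed
  also have "\<dots> = 2 * card (sub t v) - 1"
  proof -
    have disj: "\<And>i j. i \<noteq> j \<Longrightarrow> sub t (v @ [i]) \<inter> sub t (v @ [j]) = {}"
      unfolding sub_def by auto
    have nv: "v \<notin> (\<Union>i<nchild t v. sub t (v @ [i]))" unfolding sub_def by auto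
    have "card (sub t v) = Suc (card (\<Union>i<nchild t v. sub t (v @ [i])))"
      using sub_decomp[OF pt Suc.prems(1)] nv fs by (simp add: card_insert_if)
    moreover have "card (\<Union>i<nchild t v. sub t (v @ [i])) = (\<Sum>i<nchild t v. card (sub t (v @ [i])))"
      by (rule card_UN_disjoint) (use fs disj in auto)
    ultimately show ?thesis by (simp add: sum_distrib_left)
  qed
  finally show ?case .
qed

lemma length_le_card:
  assumes pt: "plane_tree t" and w: "w \<in> t"
  shows "length w < card t"
proof -
  have "(\<lambda>j. take j w) ` {..length w} \<subseteq> t"
    using w plane_tree_prefix[OF pt] by (auto, metis append_take_drop_id)
  moreover have "inj_on (\<lambda>j. take j w) {..length w}"
    by (rule inj_onI) (metis atMost_iff length_take min.absorb2)
  ultimately have "card {..length w} \<le> card t"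
    using pt unfolding plane_tree_def by (metis card_image card_mono)
  then show ?thesis by simp
qed

lemma theta_length:
  assumes pt: "plane_tree t"
  shows "length (contour_aux (card t) t []) = 2 * card t - 1"
proof -
  have "sub t [] = t" unfolding sub_def by auto
  moreover have "[] \<in> t" using pt unfolding plane_tree_def by simp
  moreover have "\<forall>w\<in>sub t []. length w \<le> length [] + card t"
    using length_le_card[OF pt] unfolding sub_def by (auto intro: less_imp_le)
  ultimately show ?thesis using contour_length[OF pt, of "[]" "card t"] by simp
qed

lemma take_prefix_chain:
  assumes ch: "successively adj xs" and j: "j < length xs"
  shows "i \<le> j \<Longrightarrow> (\<forall>k. i \<le> k \<and> k \<le> j \<longrightarrow> m \<le> length (xs ! k)) \<Longrightarrow> take m (xs ! j) = take m (xs ! i)"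
  using j
proof (induction j)
  case 0 then show ?case by simp
next
  case (Suc j)
  show ?case
  proof (cases "i = Suc j")
    case True then show ?thesis by simp
  next
    case False
    then have ij: "i \<le> j" using Suc.prems by simp
    have IH: "take m (xs ! j) = take m (xs ! i)" using Suc ij by simp
    have a: "adj (xs ! j) (xs ! Suc j)" using successively_nth[OF ch Suc.prems(3)] .
    have m1: "m \<le> length (xs ! j)" "m \<le> length (xs ! Suc j)" using Suc.prems ij by auto
    have "take m (xs ! Suc j) = take m (xs ! j)"
      using a m1 unfolding adj_def by auto
    then show ?thesis using IH by simp
  qed
qed

lemma lcp_take:
  "take m u = take m w \<Longrightarrow> m \<le> length u \<Longrightarrow> m \<le> length w \<Longrightarrow> m \<le> length (lcp u w)"
proof (induction u w arbitrary: m rule: lcp.induct)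
  case (1 x xs y ys)
  show ?case
  proof (cases m)
    case 0 then show ?thesis by simp
  next
    case (Suc m')
    then have "x = y" "take m' xs = take m' ys" using 1(2) by auto
    then show ?thesis using 1 Suc by auto
  qed
qed auto

lemma chain_dist:
  assumes ch: "successively adj xs" and ij: "i \<le> j" "j < length xs"
  shows "\<exists>k. i \<le> k \<and> k \<le> j \<and> length (xs ! k) \<le> length (xs ! i) \<and> length (xs ! k) \<le> length (xs ! j) \<and>
     tree_dist (xs ! i) (xs ! j) \<le> (length (xs ! i) - length (xs ! k)) + (length (xs ! j) - length (xs ! k))"
proof -
  define L where "L = (\<lambda>k. length (xs ! k)) ` {i..j}"
  have L: "finite L" "L \<noteq> {}" unfolding L_def using ij by auto
  define m where "m = Min L"
  obtain k where k: "k \<in> {i..j}" "length (xs ! k) = m" using Min_in[OF L] unfolding m_def L_def by auto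
  have mle: "\<forall>k'. i \<le> k' \<and> k' \<le> j \<longrightarrow> m \<le> length (xs ! k')"
    unfolding m_def L_def using L by auto
  have tk: "take m (xs ! j) = take m (xs ! i)" by (rule take_prefix_chain[OF ch ij(2) ij(1) mle])
  have mi: "m \<le> length (xs ! i)" "m \<le> length (xs ! j)" using mle ij by auto
  have "m \<le> length (lcp (xs ! i) (xs ! j))" using lcp_take[OF tk[symmetric] mi] .
  then have "tree_dist (xs ! i) (xs ! j) \<le> (length (xs ! i) - m) + (length (xs ! j) - m)"
    unfolding tree_dist_def using mi by linarith
  then show ?thesis using k mi by auto
qed


definition Wm :: "real \<Rightarrow> (real \<Rightarrow> real) \<Rightarrow> real" where
  "Wm \<alpha> f = (SUP p\<in>{p. fst p \<in> {0..1} \<and> snd p \<in> {0..1} \<and> \<bar>fst p - snd p\<bar> \<le> \<alpha>}. \<bar>f (fst p) - f (snd p)\<bar>)"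

definition phi :: "real \<Rightarrow> real \<Rightarrow> real" where
  "phi \<beta> x = min 1 (max 0 (4 * x / \<beta> - 1))"

definition Gf :: "real \<Rightarrow> real \<Rightarrow> (real \<Rightarrow> real \<times> real) \<Rightarrow> real" where
  "Gf \<alpha> \<beta> f = phi \<beta> (Wm \<alpha> (\<lambda>s. fst (f s)))"

lemma Wm_upper:
  assumes B: "\<forall>s\<in>{0..1}. \<bar>f s\<bar> \<le> B" and st: "s \<in> {0..1}" "t \<in> {0..1}" "\<bar>s - t\<bar> \<le> \<alpha>"
  shows "\<bar>f s - f t\<bar> \<le> Wm \<alpha> f"
  unfolding Wm_def
proof (rule cSUP_upper2[where x="(s,t)"])
  show "(s, t) \<in> {p. fst p \<in> {0..1} \<and> snd p \<in> {0..1} \<and> \<bar>fst p - snd p\<bar> \<le> \<alpha>}" using st by simp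
  show "bdd_above ((\<lambda>p. \<bar>f (fst p) - f (snd p)\<bar>) ` {p. fst p \<in> {0..1} \<and> snd p \<in> {0..1} \<and> \<bar>fst p - snd p\<bar> \<le> \<alpha>})"
  proof (rule bdd_aboveI2)
    fix p assume "p \<in> {p. fst p \<in> {0..1} \<and> snd p \<in> {0..1} \<and> \<bar>fst p - snd p\<bar> \<le> \<alpha>}"
    then have "\<bar>f (fst p)\<bar> \<le> B" "\<bar>f (snd p)\<bar> \<le> B" using B by auto
    then show "\<bar>f (fst p) - f (snd p)\<bar> \<le> 2 * B" by linarith
  qed
qed simp

lemma Wm_least:
  assumes a: "\<alpha> \<ge> 0" and c: "\<And>s t. s \<in> {0..1} \<Longrightarrow> t \<in> {0..1} \<Longrightarrow> \<bar>s - t\<bar> \<le> \<alpha> \<Longrightarrow> \<bar>f s - f t\<bar> \<le> c"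
  shows "Wm \<alpha> f \<le> c"
  unfolding Wm_def
proof (rule cSUP_least)
  show "{p. fst p \<in> {0..1} \<and> snd p \<in> {0..1} \<and> \<bar>fst p - snd p\<bar> \<le> \<alpha>} \<noteq> {}"
  proof -
    have "((0::real),(0::real)) \<in> {p. fst p \<in> {0..1} \<and> snd p \<in> {0..1} \<and> \<bar>fst p - snd p\<bar> \<le> \<alpha>}" using a by simp
    then show ?thesis by blast
  qed
qed (use c in auto)

lemma Wm_lip:
  assumes a: "\<alpha> \<ge> 0" and B: "\<forall>s\<in>{0..1}. \<bar>f s\<bar> \<le> B" and d: "\<And>s. s \<in> {0..1} \<Longrightarrow> \<bar>f s - g s\<bar> \<le> d"
  shows "Wm \<alpha> g \<le> Wm \<alpha> f + 2 * d"
proof (rule Wm_least[OF a])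
  fix s t assume st: "s \<in> {0..1}" "t \<in> {0..1}" "\<bar>s - t\<bar> \<le> \<alpha>"
  have "\<bar>f s - f t\<bar> \<le> Wm \<alpha> f" by (rule Wm_upper[OF B st])
  moreover have "\<bar>f s - g s\<bar> \<le> d" "\<bar>f t - g t\<bar> \<le> d" using d st by auto
  ultimately show "\<bar>g s - g t\<bar> \<le> Wm \<alpha> f + 2 * d" by linarith
qed

lemma phi_bounds: "0 \<le> phi \<beta> x" "phi \<beta> x \<le> 1"
  unfolding phi_def by auto

lemma phi_abs: "\<bar>phi \<beta> x\<bar> \<le> 1"
  unfolding phi_def by auto

lemma phi_lip:
  assumes b: "\<beta> > 0"
  shows "\<bar>phi \<beta> x - phi \<beta> y\<bar> \<le> 4 / \<beta> * \<bar>x - y\<bar>"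
proof -
  have "\<bar>(4 * x / \<beta> - 1) - (4 * y / \<beta> - 1)\<bar> = \<bar>4 / \<beta> * (x - y)\<bar>"
    by (rule arg_cong[where f=abs]) (simp add: algebra_simps diff_divide_distrib)
  also have "\<dots> = 4 / \<beta> * \<bar>x - y\<bar>" using b by (subst abs_mult) simp
  finally have "\<bar>(4 * x / \<beta> - 1) - (4 * y / \<beta> - 1)\<bar> = 4 / \<beta> * \<bar>x - y\<bar>" .
  moreover have "\<bar>min 1 (max 0 u) - min 1 (max 0 v)\<bar> \<le> \<bar>u - v\<bar>" for u v :: real
    by (simp add: min_def max_def abs_if)
  ultimately show ?thesis unfolding phi_def by metis
qed

lemma phi_one: "\<beta> > 0 \<Longrightarrow> x \<ge> \<beta> / 2 \<Longrightarrow> phi \<beta> x = 1"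
  unfolding phi_def by (auto simp: field_simps min_def max_def)

lemma phi_zero: "\<beta> > 0 \<Longrightarrow> x \<le> \<beta> / 4 \<Longrightarrow> phi \<beta> x = 0"
  unfolding phi_def by (auto simp: field_simps min_def max_def)

lemma cont_bound:
  fixes h :: "real \<Rightarrow> real"
  assumes "continuous_on {0..1} h"
  shows "\<exists>B. \<forall>s\<in>{0..1}. \<bar>h s\<bar> \<le> B"
proof -
  have "bounded (h ` {0..1})" by (rule compact_imp_bounded[OF compact_continuous_image[OF assms compact_Icc]])
  then show ?thesis unfolding bounded_iff by auto
qed

lemma bcont_Gf:
  assumes a: "\<alpha> \<ge> 0" and b: "\<beta> > 0"
  shows "bcont_functional (Gf \<alpha> \<beta>)"
  unfolding bcont_functional_def
proof (intro conjI allI impI)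
  show "\<exists>B. \<forall>f. continuous_on {0..1} f \<longrightarrow> \<bar>Gf \<alpha> \<beta> f\<bar> \<le> B"
    by (rule exI[where x=1]) (auto simp: Gf_def phi_abs)
next
  fix f :: "real \<Rightarrow> real \<times> real" and e :: real
  assume f: "continuous_on {0..1} f" and e: "0 < e"
  show "\<exists>\<delta>>0. \<forall>g. continuous_on {0..1} g \<and> unif_dist f g < \<delta> \<longrightarrow> \<bar>Gf \<alpha> \<beta> g - Gf \<alpha> \<beta> f\<bar> < e"
  proof (intro exI[where x="e * \<beta> / 16"] conjI allI impI)
    show "0 < e * \<beta> / 16" using e b by simp
    fix g assume g: "continuous_on {0..1} g \<and> unif_dist f g < e * \<beta> / 16"
    define d where "d = unif_dist f g"
    have fc: "continuous_on {0..1} (\<lambda>s. fst (f s))" using f by (intro continuous_intros)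
    have gc: "continuous_on {0..1} (\<lambda>s. fst (g s))" using g by (intro continuous_intros) auto
    obtain Bf where Bf: "\<forall>s\<in>{0..1}. \<bar>fst (f s)\<bar> \<le> Bf" using cont_bound[OF fc] by blast
    obtain Bg where Bg: "\<forall>s\<in>{0..1}. \<bar>fst (g s)\<bar> \<le> Bg" using cont_bound[OF gc] by blast
    have dc: "continuous_on {0..1} (\<lambda>s. dist (f s) (g s))" using f g by (intro continuous_intros) auto
    obtain Bd where Bd: "\<forall>s\<in>{0..1}. \<bar>dist (f s) (g s)\<bar> \<le> Bd" using cont_bound[OF dc] by blast
    have ds: "\<bar>fst (f s) - fst (g s)\<bar> \<le> d" if s: "s \<in> {0..1}" for s
    proof -
      have "\<bar>fst (f s) - fst (g s)\<bar> \<le> dist (f s) (g s)"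
        using dist_fst_le[of "f s" "g s"] by (simp add: dist_real_def)
      also have "\<dots> \<le> d" unfolding d_def unif_dist_def
        by (rule cSUP_upper[OF s]) (rule bdd_aboveI2, use Bd in auto)
      finally show ?thesis .
    qed
    have ds': "\<bar>fst (g s) - fst (f s)\<bar> \<le> d" if s: "s \<in> {0..1}" for s using ds[OF s] by linarith
    have w1: "Wm \<alpha> (\<lambda>s. fst (g s)) \<le> Wm \<alpha> (\<lambda>s. fst (f s)) + 2 * d" by (rule Wm_lip[OF a Bf ds])
    have w2: "Wm \<alpha> (\<lambda>s. fst (f s)) \<le> Wm \<alpha> (\<lambda>s. fst (g s)) + 2 * d" by (rule Wm_lip[OF a Bg ds'])
    have "\<bar>Gf \<alpha> \<beta> g - Gf \<alpha> \<beta> f\<bar> \<le> 4 / \<beta> * \<bar>Wm \<alpha> (\<lambda>s. fst (g s)) - Wm \<alpha> (\<lambda>s. fst (f s))\<bar>"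
      unfolding Gf_def by (rule phi_lip[OF b])
    also have "\<dots> \<le> 4 / \<beta> * (2 * d)"
      using w1 w2 b by (intro mult_left_mono) auto
    also have "\<dots> < 4 / \<beta> * (2 * (e * \<beta> / 16))"
      using g b unfolding d_def by (intro mult_strict_left_mono) auto
    also have "\<dots> = e / 2" using b by (simp add: field_simps)
    also have "\<dots> < e" using e by simp
    finally show "\<bar>Gf \<alpha> \<beta> g - Gf \<alpha> \<beta> f\<bar> < e" .
  qed
qed

lemma choose_alpha:
  assumes X: "cont_process N X" and b: "\<beta> > 0"
  shows "\<exists>\<alpha>>0. (\<integral>\<omega>. Gf \<alpha> \<beta> (X \<omega>) \<partial>N) < \<beta>"
proof -
  interpret prob_space N using X unfolding cont_process_def by auto
  define u where "u k \<omega> = Gf (1 / real (Suc k)) \<beta> (X \<omega>)" for k \<omega>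
  show ?thesis
  proof (cases "\<forall>k. integrable N (u k)")
    case False
    then obtain k where "\<not> integrable N (u k)" by blast
    then have "(\<integral>\<omega>. u k \<omega> \<partial>N) = 0" by (rule not_integrable_integral_eq)
    then show ?thesis using b unfolding u_def by (intro exI[where x="1 / real (Suc k)"]) auto
  next
    case True
    have "(\<lambda>k. \<integral>\<omega>. u k \<omega> \<partial>N) \<longlonglongrightarrow> (\<integral>\<omega>. 0 \<partial>N)"
    proof (rule integral_dominated_convergence[where w="\<lambda>_. 1"])
      show "(\<lambda>\<omega>. 0::real) \<in> borel_measurable N" by simp
      show "\<And>k. u k \<in> borel_measurable N" using True by auto
      show "integrable N (\<lambda>_. 1::real)" by simp
      show "\<And>k. AE \<omega> in N. norm (u k \<omega>) \<le> 1" unfolding u_def Gf_def using phi_abs by simp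
      show "AE \<omega> in N. (\<lambda>k. u k \<omega>) \<longlonglongrightarrow> 0"
      proof (rule AE_I2)
        fix \<omega> assume w: "\<omega> \<in> space N"
        have fc: "continuous_on {0..1} (\<lambda>s. fst (X \<omega> s))"
          using X w unfolding cont_process_def by (auto intro: continuous_intros)
        have uc: "uniformly_continuous_on {0..1} (\<lambda>s. fst (X \<omega> s))"
          by (rule compact_uniformly_continuous[OF fc compact_Icc])
        obtain d where d: "d > 0" "\<And>s t. s \<in> {0..1} \<Longrightarrow> t \<in> {0..1} \<Longrightarrow> dist t s < d \<Longrightarrow>
            dist (fst (X \<omega> t)) (fst (X \<omega> s)) < \<beta> / 4"
          using uc b unfolding uniformly_continuous_on_def by (metis zero_less_divide_iff zero_less_numeral)
        obtain n0 where n0: "n0 > 0" "inverse (real n0) < d" using ex_inverse_of_nat_less[OF d(1)] by auto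
        show "(\<lambda>k. u k \<omega>) \<longlonglongrightarrow> 0"
        proof (rule tendsto_eventually, rule eventually_sequentiallyI[where c=n0])
          fix k assume k: "n0 \<le> k"
          have kd: "1 / real (Suc k) < d"
          proof -
            have "1 / real (Suc k) \<le> inverse (real n0)" using k n0(1) by (simp add: field_simps)
            then show ?thesis using n0 by linarith
          qed
          have "Wm (1 / real (Suc k)) (\<lambda>s. fst (X \<omega> s)) \<le> \<beta> / 4"
          proof (rule Wm_least)
            fix s t assume st: "s \<in> {0..1}" "t \<in> {0..1}" "\<bar>s - t\<bar> \<le> 1 / real (Suc k)"
            then have "dist s t < d" using kd by (simp add: dist_real_def)
            then show "\<bar>fst (X \<omega> s) - fst (X \<omega> t)\<bar> \<le> \<beta> / 4"
              using d(2)[OF st(2) st(1)] by (simp add: dist_real_def)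
          qed simp
          then show "u k \<omega> = 0" unfolding u_def Gf_def by (rule phi_zero[OF b])
        qed
      qed
    qed
    then have "(\<lambda>k. \<integral>\<omega>. u k \<omega> \<partial>N) \<longlonglongrightarrow> 0" by simp
    then have "eventually (\<lambda>k. (\<integral>\<omega>. u k \<omega> \<partial>N) < \<beta>) sequentially"
      using b by (rule order_tendstoD)
    then obtain k0 where "\<forall>k\<ge>k0. (\<integral>\<omega>. u k \<omega> \<partial>N) < \<beta>" unfolding eventually_sequentially by blast
    then obtain k where "(\<integral>\<omega>. u k \<omega> \<partial>N) < \<beta>" by blast
    then show ?thesis unfolding u_def by (intro exI[where x="1 / real (Suc k)"]) auto
  qed
qed


lemma T_meas:
  fixes M :: "'a measure" and T :: "'a \<Rightarrow> nat list set" and ty :: "'a \<Rightarrow> nat list \<Rightarrow> 's::countable"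
    and f :: "nat list set \<Rightarrow> real"
  assumes valid: "valid_law M T ty D"
  shows "(\<lambda>\<omega>. f (T \<omega>)) \<in> borel_measurable M"
proof -
  let ?U = "Ush :: (nat list set \<times> (nat list \<Rightarrow> 's)) set"
  define shp where "shp \<omega> = typed_shape (T \<omega>) (ty \<omega>)" for \<omega>
  have rlt: "random_labeled_tree M T ty D" using valid unfolding valid_law_def by auto
  then have pt: "\<And>\<omega>. \<omega> \<in> space M \<Longrightarrow> plane_tree (T \<omega>)"
    and Es: "\<And>s. shape_event M T ty s \<in> sets M"
    unfolding random_labeled_tree_def shape_event_def by auto
  have shp_meas: "shp \<in> measurable M (count_space ?U)"
    unfolding measurable_count_space_eq_countable[OF countable_Ush]
  proof (intro conjI ballI)
    show "shp \<in> space M \<rightarrow> ?U" using pt unfolding shp_def Ush_def by auto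
    fix a assume "a \<in> ?U"
    have "shp -` {a} \<inter> space M = shape_event M T ty a" unfolding shape_event_def shp_def by auto
    then show "shp -` {a} \<inter> space M \<in> sets M" using Es by simp
  qed
  have "(\<lambda>\<omega>. f (fst (shp \<omega>))) \<in> borel_measurable M"
    by (rule measurable_compose[OF shp_meas]) simp
  then show ?thesis unfolding shp_def by simp
qed

lemma lin_interp_at:
  assumes "N > 0" "i \<le> N"
  shows "lin_interp N f (real i / real N) = f i"
  using assms unfolding lin_interp_def by (auto simp: Let_def)

lemma lin_interp_bound: "\<exists>B. \<forall>s\<in>{0..1}. \<bar>lin_interp N f s\<bar> \<le> B"
proof -
  define B where "B = (\<Sum>k\<le>N. \<bar>f k\<bar>)"
  have fk: "\<bar>f k\<bar> \<le> B" if "k \<le> N" for k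
    unfolding B_def by (rule member_le_sum[where f="\<lambda>k. \<bar>f k\<bar>"]) (use that in auto)
  have "\<bar>lin_interp N f s\<bar> \<le> 3 * B" if s: "s \<in> {0..1}" for s
  proof (cases "N = 0")
    case True then show ?thesis using fk[of 0] unfolding lin_interp_def by (simp add: B_def)
  next
    case False
    define x where "x = s * real N"
    define i where "i = nat \<lfloor>x\<rfloor>"
    have x0: "x \<ge> 0" using s unfolding x_def by auto
    have ri: "real i = of_int \<lfloor>x\<rfloor>" unfolding i_def using x0 by simp
    have xi: "0 \<le> x - real i" "x - real i \<le> 1" unfolding ri by linarith+
    have B0: "B \<ge> 0" unfolding B_def by (simp add: sum_nonneg)
    show ?thesis
    proof (cases "i \<ge> N")
      case True
      then show ?thesis using False fk[of N] B0 unfolding lin_interp_def by (simp add: Let_def x_def[symmetric] i_def[symmetric])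
    next
      case iN: False
      have "\<bar>(x - real i) * (f (Suc i) - f i)\<bar> \<le> \<bar>f (Suc i) - f i\<bar>"
        using xi by (simp add: abs_mult mult_le_cancel_right1 mult_left_le_one_le)
      moreover have "\<bar>f (Suc i)\<bar> \<le> B" "\<bar>f i\<bar> \<le> B" using iN fk by auto
      ultimately have "\<bar>f i + (x - real i) * (f (Suc i) - f i)\<bar> \<le> 3 * B" by linarith
      then show ?thesis using False iN unfolding lin_interp_def by (simp add: Let_def x_def[symmetric] i_def[symmetric])
    qed
  qed
  then show ?thesis by blast
qed

lemma lcp_self: "lcp u u = u"
  by (induction u) auto

lemma lcp_comm: "lcp u v = lcp v u"
  by (induction u v rule: lcp.induct) auto

lemma tree_dist_self: "tree_dist u u = 0"
  unfolding tree_dist_def lcp_self by simp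

lemma tree_dist_comm: "tree_dist u v = tree_dist v u"
  unfolding tree_dist_def by (simp add: lcp_comm add.commute)

lemma W_from_pair:
  assumes pt: "plane_tree t" and c2: "card t \<ge> 2"
    and p: "p \<le> 2 * card t - 2" and k: "k \<le> 2 * card t - 2"
    and pk: "\<bar>int p - int k\<bar> \<le> \<lfloor>\<alpha> * real (card t)\<rfloor>" and a0: "\<alpha> > 0" and b: "\<beta> > 0"
    and big: "a * (real (length (theta t p)) - real (length (theta t k))) > \<beta> / 2"
  shows "phi \<beta> (Wm \<alpha> (\<lambda>s. a * contour_fun t s)) = 1"
proof -
  define N where "N = 2 * card t - 2"
  have N0: "N > 0" "real N \<ge> real (card t)" using c2 unfolding N_def by auto
  obtain B where B: "\<forall>s\<in>{0..1}. \<bar>contour_fun t s\<bar> \<le> B"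
    using lin_interp_bound unfolding contour_fun_def by blast
  have aB: "\<forall>s\<in>{0..1}. \<bar>a * contour_fun t s\<bar> \<le> \<bar>a\<bar> * B"
    using B by (auto simp: abs_mult intro: mult_left_mono)
  have s1: "real p / real N \<in> {0..1}" "real k / real N \<in> {0..1}" using p k N0 unfolding N_def by auto
  have "\<bar>real p - real k\<bar> \<le> \<alpha> * real (card t)"
  proof -
    have "\<bar>real p - real k\<bar> = real_of_int \<bar>int p - int k\<bar>" by simp
    also have "\<dots> \<le> real_of_int \<lfloor>\<alpha> * real (card t)\<rfloor>" using pk by linarith
    also have "\<dots> \<le> \<alpha> * real (card t)" by (rule of_int_floor_le)
    finally show ?thesis .
  qed
  also have "\<dots> \<le> \<alpha> * real N" using N0 a0 by (intro mult_left_mono) auto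
  finally have "\<bar>real p - real k\<bar> / real N \<le> \<alpha>" using N0 by (simp add: field_simps)
  then have s2: "\<bar>real p / real N - real k / real N\<bar> \<le> \<alpha>"
    by (simp add: diff_divide_distrib[symmetric])
  have "\<bar>a * contour_fun t (real p / real N) - a * contour_fun t (real k / real N)\<bar> \<le> Wm \<alpha> (\<lambda>s. a * contour_fun t s)"
    by (rule Wm_upper[OF aB s1 s2])
  moreover have "contour_fun t (real p / real N) = real (length (theta t p))"
    "contour_fun t (real k / real N) = real (length (theta t k))"
  proof -
    have cf: "contour_fun t = lin_interp N (\<lambda>i. real (length (theta t i)))" unfolding contour_fun_def N_def ..
    have "p \<le> N" "k \<le> N" using p k unfolding N_def by auto
    then show "contour_fun t (real p / real N) = real (length (theta t p))"
      "contour_fun t (real k / real N) = real (length (theta t k))"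
      unfolding cf using lin_interp_at[OF N0(1)] by auto
  qed
  ultimately have "Wm \<alpha> (\<lambda>s. a * contour_fun t s) \<ge> \<beta> / 2" using big by (simp add: right_diff_distrib)
  then show ?thesis by (rule phi_one[OF b])
qed

lemma key_pointwise:
  assumes pt: "plane_tree t" and a0: "\<alpha> > 0" and b: "\<beta> > 0"
    and i: "i \<le> 2 * card t - 2" and j: "j \<le> 2 * card t - 2"
    and ij: "\<bar>int i - int j\<bar> \<le> \<lfloor>\<alpha> * real (card t)\<rfloor>"
    and big: "a * real (tree_dist (theta t i) (theta t j)) > \<beta>"
  shows "phi \<beta> (Wm \<alpha> (\<lambda>s. a * contour_fun t s)) = 1"
proof -
  define xs where "xs = contour_aux (card t) t []"
  have th: "\<And>k. theta t k = xs ! k" unfolding xs_def theta_def by simp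
  have len: "length xs = 2 * card t - 1" unfolding xs_def by (rule theta_length[OF pt])
  have ch: "successively adj xs" unfolding xs_def using contour_chain by blast
  have c1: "card t \<ge> 1"
    using pt unfolding plane_tree_def by (metis One_nat_def Suc_leI card_gt_0_iff empty_iff)
  have c2: "card t \<ge> 2"
  proof (rule ccontr)
    assume "\<not> card t \<ge> 2"
    then have "card t = 1" using c1 by simp
    then have "i = 0" "j = 0" using i j by auto
    then show False using big b by (simp add: tree_dist_self)
  qed
  define i' where "i' = min i j"
  define j' where "j' = max i j"
  have ij': "i' \<le> j'" "j' < length xs" using len i j c2 unfolding i'_def j'_def by auto
  obtain k where k: "i' \<le> k" "k \<le> j'" "length (xs ! k) \<le> length (xs ! i')" "length (xs ! k) \<le> length (xs ! j')"
    "tree_dist (xs ! i') (xs ! j') \<le> (length (xs ! i') - length (xs ! k)) + (length (xs ! j') - length (xs ! k))"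
    using chain_dist[OF ch ij'] by blast
  have dsym: "tree_dist (xs ! i) (xs ! j) = tree_dist (xs ! i') (xs ! j')"
    unfolding i'_def j'_def by (cases "i \<le> j") (auto simp: tree_dist_comm min_def max_def)
  have ki: "length (xs ! k) \<le> length (xs ! i)" "length (xs ! k) \<le> length (xs ! j)"
    using k(3,4) unfolding i'_def j'_def by (cases "i \<le> j"; auto simp: min_def max_def)+
  have dle: "real (tree_dist (xs ! i) (xs ! j)) \<le>
      (real (length (xs ! i)) - real (length (xs ! k))) + (real (length (xs ! j)) - real (length (xs ! k)))"
  proof -
    have "tree_dist (xs ! i) (xs ! j) \<le> (length (xs ! i) - length (xs ! k)) + (length (xs ! j) - length (xs ! k))"
    proof -
      have "(i' = i \<and> j' = j) \<or> (i' = j \<and> j' = i)" unfolding i'_def j'_def by auto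
      then show ?thesis
      proof
        assume "i' = i \<and> j' = j" then show ?thesis using k(5) by (elim conjE) simp
      next
        assume h: "i' = j \<and> j' = i"
        have "tree_dist (xs ! j) (xs ! i) \<le> (length (xs ! j) - length (xs ! k)) + (length (xs ! i) - length (xs ! k))"
          using k(5) unfolding h[THEN conjunct1] h[THEN conjunct2] .
        then show ?thesis using tree_dist_comm[of "xs ! i" "xs ! j"] by linarith
      qed
    qed
    then have "real (tree_dist (xs ! i) (xs ! j)) \<le> real ((length (xs ! i) - length (xs ! k)) + (length (xs ! j) - length (xs ! k)))"
      by (rule of_nat_mono)
    then show ?thesis using ki by (simp only: of_nat_add of_nat_diff)
  qed
  have a_pos: "a > 0"
  proof (rule ccontr)
    assume "\<not> a > 0"
    then have "a * real (tree_dist (theta t i) (theta t j)) \<le> 0" by (simp add: mult_nonpos_nonneg)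
    then show False using big b by simp
  qed
  have "a * real (tree_dist (xs ! i) (xs ! j)) \<le>
     a * (real (length (xs ! i)) - real (length (xs ! k))) + a * (real (length (xs ! j)) - real (length (xs ! k)))"
  proof -
    have "a * real (tree_dist (xs ! i) (xs ! j)) \<le>
      a * ((real (length (xs ! i)) - real (length (xs ! k))) + (real (length (xs ! j)) - real (length (xs ! k))))"
      using dle a_pos by (intro mult_left_mono) auto
    also have "\<dots> = a * (real (length (xs ! i)) - real (length (xs ! k))) + a * (real (length (xs ! j)) - real (length (xs ! k)))"
      by (rule distrib_left)
    finally show ?thesis .
  qed
  then have "a * (real (length (xs ! i)) - real (length (xs ! k))) > \<beta> / 2 \<or>
             a * (real (length (xs ! j)) - real (length (xs ! k))) > \<beta> / 2"
    using big unfolding th by linarith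
  moreover have kk: "k \<le> 2 * card t - 2" using k(2) ij' len by simp
  moreover have "\<bar>int i - int k\<bar> \<le> \<lfloor>\<alpha> * real (card t)\<rfloor>" "\<bar>int j - int k\<bar> \<le> \<lfloor>\<alpha> * real (card t)\<rfloor>"
    using k(1,2) ij unfolding i'_def j'_def by (cases "i \<le> j"; auto simp: min_def max_def)+
  ultimately show ?thesis
    using W_from_pair[OF pt c2 i kk _ a0 b] W_from_pair[OF pt c2 j kk _ a0 b] unfolding th by blast
qed


theorem lemma3p3:
  fixes M :: "nat \<Rightarrow> 'a measure"
    and T :: "nat \<Rightarrow> 'a \<Rightarrow> nat list set"
    and ty :: "nat \<Rightarrow> 'a \<Rightarrow> nat list \<Rightarrow> 's::countable"
    and D :: "nat \<Rightarrow> 'a \<Rightarrow> nat list \<Rightarrow> real"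
    and a b :: "nat \<Rightarrow> real"
    and N :: "'b measure"
    and X :: "'b \<Rightarrow> real \<Rightarrow> real \<times> real"
  assumes valid: "\<And>n. valid_law (M n) (T n) (ty n) (D n)"
    and a_pos: "\<And>n. a n > 0" and b_pos: "\<And>n. b n > 0"
    and a_lim: "a \<longlonglongrightarrow> 0" and b_lim: "b \<longlonglongrightarrow> 0"
    and X_proc: "cont_process N X"
    and conv: "\<And>G. bcont_functional G \<Longrightarrow>
        (\<lambda>n. sym_expect (M n) (T n) (D n)
               (\<lambda>t d. G (\<lambda>s. (a n * contour_fun t s, b n * label_fun t d s))))
        \<longlonglongrightarrow> (\<integral>\<omega>. G (X \<omega>) \<partial>N)"
  shows "\<forall>\<beta>>0. \<exists>\<alpha>>0. limsup (\<lambda>n. ereal (measure (M n)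
           {\<omega>\<in>space (M n). \<exists>i j. i \<le> 2 * card (T n \<omega>) - 2 \<and> j \<le> 2 * card (T n \<omega>) - 2
              \<and> \<bar>int i - int j\<bar> \<le> \<lfloor>\<alpha> * real (card (T n \<omega>))\<rfloor>
              \<and> a n * real (tree_dist (theta (T n \<omega>) i) (theta (T n \<omega>) j)) > \<beta>})) < ereal \<beta>"
proof (intro allI impI)
  fix \<beta> :: real assume bpos: "\<beta> > 0"
  obtain \<alpha> where a0: "\<alpha> > 0" and Lb: "(\<integral>\<omega>. Gf \<alpha> \<beta> (X \<omega>) \<partial>N) < \<beta>"
    using choose_alpha[OF X_proc bpos] by blast
  define h where "h n t = phi \<beta> (Wm \<alpha> (\<lambda>s. a n * contour_fun t s))" for n t
  define E where "E n = {\<omega>\<in>space (M n). \<exists>i j. i \<le> 2 * card (T n \<omega>) - 2 \<and> j \<le> 2 * card (T n \<omega>) - 2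
              \<and> \<bar>int i - int j\<bar> \<le> \<lfloor>\<alpha> * real (card (T n \<omega>))\<rfloor>
              \<and> a n * real (tree_dist (theta (T n \<omega>) i) (theta (T n \<omega>) j)) > \<beta>}" for n
  have bc: "bcont_functional (Gf \<alpha> \<beta>)" using bcont_Gf a0 bpos by simp
  have lim: "(\<lambda>n. sym_expect (M n) (T n) (D n)
               (\<lambda>t d. Gf \<alpha> \<beta> (\<lambda>s. (a n * contour_fun t s, b n * label_fun t d s))))
        \<longlonglongrightarrow> (\<integral>\<omega>. Gf \<alpha> \<beta> (X \<omega>) \<partial>N)" by (rule conv[OF bc])
  have eq: "sym_expect (M n) (T n) (D n) (\<lambda>t d. Gf \<alpha> \<beta> (\<lambda>s. (a n * contour_fun t s, b n * label_fun t d s)))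
      = (\<integral>\<omega>. h n (T n \<omega>) \<partial>M n)" for n
  proof -
    have "sym_expect (M n) (T n) (D n) (\<lambda>t d. Gf \<alpha> \<beta> (\<lambda>s. (a n * contour_fun t s, b n * label_fun t d s)))
      = (\<integral>\<omega>. (\<Sum>\<sigma>\<in>perms (T n \<omega>). h n (sym_tree \<sigma> (T n \<omega>))) / real (card (perms (T n \<omega>))) \<partial>M n)"
      unfolding sym_expect_def Gf_def h_def by simp
    also have "\<dots> = (\<integral>\<omega>. h n (T n \<omega>) \<partial>M n)"
      by (rule transfer[OF valid]) (simp_all add: h_def phi_bounds)
    finally show ?thesis .
  qed
  have le: "measure (M n) (E n) \<le> (\<integral>\<omega>. h n (T n \<omega>) \<partial>M n)" for n
  proof -
    interpret prob_space "M n" using valid[of n] unfolding valid_law_def random_labeled_tree_def by auto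
    have pt: "\<And>\<omega>. \<omega> \<in> space (M n) \<Longrightarrow> plane_tree (T n \<omega>)"
      using valid[of n] unfolding valid_law_def random_labeled_tree_def by auto
    have hm: "(\<lambda>\<omega>. h n (T n \<omega>)) \<in> borel_measurable (M n)" by (rule T_meas[OF valid])
    have hint: "integrable (M n) (\<lambda>\<omega>. h n (T n \<omega>))"
    proof -
      have "AE \<omega> in M n. norm (h n (T n \<omega>)) \<le> 1" by (simp add: h_def phi_abs)
      then show ?thesis by (rule integrable_const_bound[OF _ hm])
    qed
    have Esub: "E n \<subseteq> space (M n)" unfolding E_def by auto
    have "measure (M n) (E n) = (\<integral>\<omega>. indicator (E n) \<omega> \<partial>M n)"
      using Esub by (simp add: Int_absorb2)
    also have "\<dots> \<le> (\<integral>\<omega>. h n (T n \<omega>) \<partial>M n)"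
    proof (rule integral_mono'[OF hint])
      fix \<omega> assume w: "\<omega> \<in> space (M n)"
      show "0 \<le> h n (T n \<omega>)" by (simp add: h_def phi_bounds)
      show "indicator (E n) \<omega> \<le> h n (T n \<omega>)"
      proof (cases "\<omega> \<in> E n")
        case True
        then obtain i j where ij: "i \<le> 2 * card (T n \<omega>) - 2" "j \<le> 2 * card (T n \<omega>) - 2"
          "\<bar>int i - int j\<bar> \<le> \<lfloor>\<alpha> * real (card (T n \<omega>))\<rfloor>"
          "a n * real (tree_dist (theta (T n \<omega>) i) (theta (T n \<omega>) j)) > \<beta>"
          unfolding E_def by blast
        have "h n (T n \<omega>) = 1" unfolding h_def by (rule key_pointwise[OF pt[OF w] a0 bpos ij])
        then show ?thesis using True by simp
      next
        case False then show ?thesis by (simp add: h_def phi_bounds)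
      qed
    qed
    finally show ?thesis .
  qed
  have lim2: "(\<lambda>n. ereal (\<integral>\<omega>. h n (T n \<omega>) \<partial>M n)) \<longlonglongrightarrow> ereal (\<integral>\<omega>. Gf \<alpha> \<beta> (X \<omega>) \<partial>N)"
    using lim unfolding eq by (rule tendsto_ereal)
  have "limsup (\<lambda>n. ereal (measure (M n) (E n))) \<le> limsup (\<lambda>n. ereal (\<integral>\<omega>. h n (T n \<omega>) \<partial>M n))"
    by (rule Limsup_mono) (simp add: le)
  also have "\<dots> = ereal (\<integral>\<omega>. Gf \<alpha> \<beta> (X \<omega>) \<partial>N)"
    by (rule lim_imp_Limsup[OF trivial_limit_sequentially lim2])
  also have "\<dots> < ereal \<beta>" using Lb by simp
  finally have "limsup (\<lambda>n. ereal (measure (M n) (E n))) < ereal \<beta>" .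
  then show "\<exists>\<alpha>>0. limsup (\<lambda>n. ereal (measure (M n)
           {\<omega>\<in>space (M n). \<exists>i j. i \<le> 2 * card (T n \<omega>) - 2 \<and> j \<le> 2 * card (T n \<omega>) - 2
              \<and> \<bar>int i - int j\<bar> \<le> \<lfloor>\<alpha> * real (card (T n \<omega>))\<rfloor>
              \<and> a n * real (tree_dist (theta (T n \<omega>) i) (theta (T n \<omega>) j)) > \<beta>})) < ereal \<beta>"
    using a0 unfolding E_def by blast
qed


end
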